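(* Consider an $\mathbb{H}_{2n+1}$-structure on $\mathbb{P}V$ such that $T$ fixes every point of the boundary hyperplane $\mathbb{P}V'$. For a point $o$ in the open orbit, let $v(o)$ denote the unique point of $\overline{\mathbb{I}\cdot o}\setminus\mathbb{I}\cdot o$. Then $v(o)$ does not depend on the choice of $o$ in the open orbit.
   Context: Work over $\mathbb{C}$, $n\ge1$. The Heisenberg group $\mathbb{H}_{2n+1}$ is $\mathbb{W}\times\mathbb{C}$ ($\mathbb{W}$ a $2n$-dimensional space with non-degenerate skew form $\omega$) with law $(w_1,t_1)(w_2,t_2)=(w_1+w_2,t_1+t_2+\tfrac12\omega(w_1,w_2))$; $T=(0,1)$, and $\mathbb{I}=\mathbb{C}T$ is its center. $V\cong\mathbb{C}^{2n+2}$. An $\mathbb{H}_{2n+1}$-structure on $\mathbb{P}V$ is an effective algebraic action with a dense open orbit; its boundary (the complement of the open orbit) is a hyperplane $\mathbb{P}V'$. For $o$ in the open orbit, $\overline{\mathbb{I}\cdot o}$ is a projective line and $\overline{\mathbb{I}\cdot o}\setminus\mathbb{I}\cdot o$ is a single point. *)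

theory Defs
  imports "HOL-Analysis.Analysis"
begin

definition hmul :: "(complex^'w \<Rightarrow> complex^'w \<Rightarrow> complex)
    \<Rightarrow> (complex^'w) \<times> complex \<Rightarrow> (complex^'w) \<times> complex \<Rightarrow> (complex^'w) \<times> complex" where
  "hmul \<omega> g h = (fst g + fst h, snd g + snd h + \<omega> (fst g) (fst h) / 2)"

definition symplectic_form :: "(complex^'w \<Rightarrow> complex^'w \<Rightarrow> complex) \<Rightarrow> bool" where
  "symplectic_form \<omega> \<longleftrightarrow>
     (\<forall>a b x y z. \<omega> (a *s x + b *s y) z = a * \<omega> x z + b * \<omega> y z) \<and>
     (\<forall>x y. \<omega> x y = - \<omega> y x) \<and>
     (\<forall>x. (\<forall>y. \<omega> x y = 0) \<longrightarrow> x = 0)"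

inductive_set poly_gen :: "('a \<Rightarrow> complex) set \<Rightarrow> ('a \<Rightarrow> complex) set" for B where
  gen: "f \<in> B \<Longrightarrow> f \<in> poly_gen B"
| const: "(\<lambda>x. c) \<in> poly_gen B"
| add: "f \<in> poly_gen B \<Longrightarrow> g \<in> poly_gen B \<Longrightarrow> (\<lambda>x. f x + g x) \<in> poly_gen B"
| mult: "f \<in> poly_gen B \<Longrightarrow> g \<in> poly_gen B \<Longrightarrow> (\<lambda>x. f x * g x) \<in> poly_gen B"

definition vpoly :: "(complex^'v \<Rightarrow> complex) set" where
  "vpoly = poly_gen (range (\<lambda>i x. x $ i))"

definition hpoly :: "((complex^'w) \<times> complex \<Rightarrow> complex) set" where
  "hpoly = poly_gen (range (\<lambda>i g. fst g $ i) \<union> {\<lambda>g. snd g})"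

text \<open>A point of P V is a complex line through the origin.\<close>
definition pline :: "complex^'v \<Rightarrow> (complex^'v) set" where
  "pline u = {c *s u | c. True}"

definition PV :: "(complex^'v) set set" where
  "PV = {pline u | u. u \<noteq> 0}"

text \<open>Zariski closure in P V: points at which every polynomial vanishing on
  (the cone over) S vanishes. For cones the vanishing ideal is homogeneous, so
  this is the projective Zariski closure.\<close>
definition zcl :: "(complex^'v) set set \<Rightarrow> (complex^'v) set set" where
  "zcl S = {pline u | u. u \<noteq> 0 \<and>
      (\<forall>p\<in>vpoly. (\<forall>L\<in>S. \<forall>x\<in>L. p x = 0) \<longrightarrow> p u = 0)}"

definition zopen :: "(complex^'v) set set \<Rightarrow> bool" where
  "zopen U \<longleftrightarrow> U \<subseteq> PV \<and> zcl (PV - U) = PV - U"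

definition pact :: "('g \<Rightarrow> complex^'v^'v) \<Rightarrow> 'g \<Rightarrow> (complex^'v) set \<Rightarrow> (complex^'v) set" where
  "pact \<rho> g L = (\<lambda>x. \<rho> g *v x) ` L"

text \<open>An H_{2n+1}-structure on P V: an effective algebraic action (given by an
  algebraic representation rho : H -> GL(V)) with a dense Zariski-open orbit Omega.\<close>
definition heis_structure ::
  "(complex^'w \<Rightarrow> complex^'w \<Rightarrow> complex) \<Rightarrow> ((complex^'w) \<times> complex \<Rightarrow> complex^'v^'v)
     \<Rightarrow> (complex^'v) set set \<Rightarrow> bool" where
  "heis_structure \<omega> \<rho> \<Omega> \<longleftrightarrow>
     \<rho> (0, 0) = mat 1 \<and>
     (\<forall>g h. \<rho> (hmul \<omega> g h) = \<rho> g ** \<rho> h) \<and>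
     (\<forall>i j. (\<lambda>g. \<rho> g $ i $ j) \<in> hpoly) \<and>
     (\<forall>g. (\<forall>L\<in>PV. pact \<rho> g L = L) \<longrightarrow> g = (0, 0)) \<and>
     (\<exists>x0\<in>PV. \<Omega> = {pact \<rho> g x0 | g. True}) \<and>
     zopen \<Omega> \<and> zcl \<Omega> = PV"

text \<open>The orbit of the centre I = C T, T = (0,1), through o.\<close>
definition center_orbit :: "((complex^'w) \<times> complex \<Rightarrow> complex^'v^'v) \<Rightarrow> (complex^'v) set \<Rightarrow> (complex^'v) set set" where
  "center_orbit \<rho> q = {pact \<rho> (0, t) q | t. True}"

end

theory Submission
  imports Defs "HOL-Computational_Algebra.Polynomial"
begin

lemma mv_smult: "A *v (c *s x) = c *s (A *v (x::complex^'n))"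
  by (simp add: vec_eq_iff matrix_vector_mult_def sum_distrib_left algebra_simps)
lemma mv_add: "A *v (x + y) = A *v x + A *v (y::complex^'n)"
  by (simp add: vec_eq_iff matrix_vector_mult_def sum.distrib algebra_simps)
lemma mv_sum: "A *v (\<Sum>k\<in>S. f k) = (\<Sum>k\<in>S. A *v (f k::complex^'n))"
  by (induction S rule: infinite_finite_induct) (auto simp: mv_add)

lemma vcoeff_unique:
  fixes a b :: "nat \<Rightarrow> complex^'n"
  assumes "\<forall>t. (\<Sum>k<m. t^k *s a k) = (\<Sum>k<m. t^k *s b k)" "k<m"
  shows "a k = b k"
proof -
  obtain n where m: "m = Suc n" using assms(2) by (cases m) auto
  have "a k $ i = b k $ i" for i
  proof -
    have "\<forall>t. (\<Sum>j\<le>n. a j $ i * t^j) = (\<Sum>j\<le>n. b j $ i * t^j)"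
    proof
      fix t :: complex
      have "(\<Sum>k<m. t^k *s a k) $ i = (\<Sum>k<m. t^k *s b k) $ i" using assms(1) by simp
      then show "(\<Sum>j\<le>n. a j $ i * t^j) = (\<Sum>j\<le>n. b j $ i * t^j)"
        by (simp add: m lessThan_Suc_atMost sum_component mult.commute)
    qed
    then show ?thesis using polyfun_eq_coeffs[of "\<lambda>j. a j $ i" n "\<lambda>j. b j $ i"] assms(2) m by auto
  qed
  then show ?thesis by (simp add: vec_eq_iff)
qed

lemma hpoly_line:
  assumes "f \<in> poly_gen (range (\<lambda>i g. fst g $ i) \<union> {\<lambda>g. snd g})"
  shows "\<exists>p. \<forall>t. f (t *s a, t * c) = poly p t"
  using assms
proof induction
  case (gen f)
  then show ?case
  proof
    assume "f \<in> range (\<lambda>i g. fst g $ i)"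
    then obtain i where "f = (\<lambda>g. fst g $ i)" by auto
    then show ?thesis by (intro exI[of _ "[:0, a$i:]"]) (simp add: mult.commute)
  next
    assume "f \<in> {\<lambda>g. snd g}"
    then show ?thesis by (intro exI[of _ "[:0, c:]"]) (simp add: mult.commute)
  qed
next
  case (const c)
  then show ?case by (intro exI[of _ "[:c:]"]) simp
next
  case (add f g)
  then obtain p q where "\<forall>t. f (t *s a, t * c) = poly p t" "\<forall>t. g (t *s a, t * c) = poly q t" by blast
  then show ?case by (intro exI[of _ "p+q"]) simp
next
  case (mult f g)
  then obtain p q where "\<forall>t. f (t *s a, t * c) = poly p t" "\<forall>t. g (t *s a, t * c) = poly q t" by blast
  then show ?case by (intro exI[of _ "p*q"]) simp
qed

definition mp :: "complex^'n^'n \<Rightarrow> nat \<Rightarrow> complex^'n \<Rightarrow> complex^'n" where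
  "mp M k x = ((\<lambda>y. M *v y) ^^ k) x"

lemma mp_0[simp]: "mp M 0 x = x" by (simp add: mp_def)
lemma mp_Suc: "mp M (Suc k) x = M *v mp M k x" by (simp add: mp_def)
lemma mp_Suc': "mp M (Suc k) x = mp M k (M *v x)" by (simp add: mp_def funpow_Suc_right del: funpow.simps)
lemma mp_add: "mp M (a + b) x = mp M a (mp M b x)" by (simp add: mp_def funpow_add)
lemma mp_smult: "mp M k (c *s x) = c *s mp M k x" by (induction k) (simp_all add: mp_Suc mv_smult)
lemma mp_plus: "mp M k (x + y) = mp M k x + mp M k y" by (induction k) (simp_all add: mp_Suc mv_add)
lemma mp_zero[simp]: "mp M k 0 = 0" by (induction k) (simp_all add: mp_Suc)
lemma mp_sum: "mp M k (\<Sum>j\<in>S. f j) = (\<Sum>j\<in>S. mp M k (f j))"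
  by (induction S rule: infinite_finite_induct) (auto simp: mp_plus)

lemma poly_lt: "degree (p::complex poly) < m \<Longrightarrow> poly p t = (\<Sum>k<m. coeff p k * t^k)"
proof -
  assume a: "degree p < m"
  have "(\<Sum>k\<le>degree p. coeff p k * t^k) = (\<Sum>k<m. coeff p k * t^k)"
    by (rule sum.mono_neutral_left) (use a in \<open>auto simp: coeff_eq_0\<close>)
  then show ?thesis by (simp add: poly_altdef)
qed

lemma expand:
  assumes "\<forall>i j. degree (Q i j) < m"
  shows "(\<chi> i j. poly (Q i j) t) *v x = (\<Sum>k<m. t^k *s ((\<chi> i j. coeff (Q i j) k) *v (x::complex^'n)))"
proof -
  have "((\<chi> i j. poly (Q i j) t) *v x) $ i = (\<Sum>k<m. t^k *s ((\<chi> i j. coeff (Q i j) k) *v x)) $ i" for i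
  proof -
    have "((\<chi> i j. poly (Q i j) t) *v x) $ i = (\<Sum>j\<in>UNIV. (\<Sum>k<m. coeff (Q i j) k * t^k) * x$j)"
      using assms by (auto simp: matrix_vector_mult_def intro!: sum.cong poly_lt)
    also have "\<dots> = (\<Sum>k<m. t^k * (\<Sum>j\<in>UNIV. coeff (Q i j) k * x$j))"
      by (simp add: sum_distrib_left sum_distrib_right sum.swap[of _ UNIV] algebra_simps)
    also have "\<dots> = (\<Sum>k<m. t^k *s ((\<chi> i j. coeff (Q i j) k) *v x)) $ i"
      by (simp add: sum_component matrix_vector_mult_def)
    finally show ?thesis .
  qed
  then show ?thesis by (simp add: vec_eq_iff)
qed

lemma onepar:
  fixes U :: "complex \<Rightarrow> complex^'n^'n"
  assumes hom: "\<And>s t. U (s + t) = U s ** U t" and U0: "U 0 = mat 1"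
    and pol: "\<And>i j. \<exists>p. \<forall>t. U t $i$j = poly p t"
  shows "\<exists>M D. (\<forall>x. mp M D x = 0) \<and> (\<forall>m\<ge>D. \<forall>t x. U t *v x = (\<Sum>k<m. (t^k / fact k) *s mp M k x))"
proof -
  define P where "P i j = (SOME p. \<forall>t. U t $i$j = poly p t)" for i j
  have P: "U t $i$j = poly (P i j) t" for i j t
    using someI_ex[OF pol[of i j]] unfolding P_def by blast
  have Ut: "U t = (\<chi> i j. poly (P i j) t)" for t by (simp add: vec_eq_iff P)
  define D where "D = Suc (\<Sum>i\<in>UNIV. \<Sum>j\<in>UNIV. degree (P i j))"
  have degD: "degree (P i j) < D" for i j
  proof -
    have "degree (P i j) \<le> (\<Sum>j\<in>UNIV. degree (P i j))" by (rule member_le_sum) auto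
    also have "\<dots> \<le> (\<Sum>i\<in>UNIV. \<Sum>j\<in>UNIV. degree (P i j))"
      by (rule member_le_sum[where f="\<lambda>i. \<Sum>j\<in>UNIV. degree (P i j)"]) auto
    finally show ?thesis unfolding D_def by simp
  qed
  define C where "C k = (\<chi> i j. coeff (P i j) k)" for k
  have CD: "k \<ge> D \<Longrightarrow> C k *v x = 0" for k x
  proof -
    assume "k \<ge> D"
    then have "coeff (P i j) k = 0" for i j using degD[of i j] by (intro coeff_eq_0) simp
    then have "C k = 0" by (simp add: C_def vec_eq_iff)
    then show ?thesis by simp
  qed
  have ex: "U t *v x = (\<Sum>k<m. t^k *s (C k *v x))" if "m \<ge> D" for m t x
    unfolding Ut C_def by (rule expand) (use degD that in \<open>auto intro: less_le_trans\<close>)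
  define M where "M = C 1"
  have rec: "of_nat (Suc k) *s (C (Suc k) *v x) = M *v (C k *v x)" for k x
  proof -
    define m where "m = max D (Suc k)"
    have m: "m \<ge> D" "k < m" unfolding m_def by auto
    define U' where "U' t = (\<chi> i j. poly (pderiv (P i j)) t)" for t
    have der: "U' t *v x = M *v (U t *v x)" for t
    proof -
      have "(U' t *v x) $ i = (M *v (U t *v x)) $ i" for i
      proof -
        define y where "y = U t *v x"
        have eqf: "(\<lambda>s. \<Sum>j\<in>UNIV. poly (P i j) (s + t) * x$j) = (\<lambda>s. \<Sum>j\<in>UNIV. poly (P i j) s * y$j)"
        proof
          fix s
          have "(U (s + t) *v x) $ i = (U s *v y) $ i" by (simp add: hom y_def matrix_vector_mul_assoc)
          then show "(\<Sum>j\<in>UNIV. poly (P i j) (s + t) * x$j) = (\<Sum>j\<in>UNIV. poly (P i j) s * y$j)"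
            by (simp add: matrix_vector_mult_def P)
        qed
        have d1: "((\<lambda>s. \<Sum>j\<in>UNIV. poly (P i j) (s + t) * x$j) has_field_derivative
                   (\<Sum>j\<in>UNIV. poly (pderiv (P i j)) (0 + t) * x$j)) (at 0)"
        proof (rule DERIV_sum)
          fix j
          have "((\<lambda>s. poly (P i j) (s + t)) has_field_derivative poly (pderiv (P i j)) (0 + t)) (at 0)"
            using DERIV_shift[of "\<lambda>s. poly (P i j) s" "poly (pderiv (P i j)) (0 + t)" 0 t] by simp
          then show "((\<lambda>s. poly (P i j) (s + t) * x$j) has_field_derivative poly (pderiv (P i j)) (0 + t) * x$j) (at 0)"
            by (rule DERIV_cmult_right)
        qed
        have d2: "((\<lambda>s. \<Sum>j\<in>UNIV. poly (P i j) s * y$j) has_field_derivative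
                   (\<Sum>j\<in>UNIV. poly (pderiv (P i j)) 0 * y$j)) (at 0)"
          by (intro DERIV_sum DERIV_cmult_right poly_DERIV)
        have "(\<Sum>j\<in>UNIV. poly (pderiv (P i j)) (0 + t) * x$j) = (\<Sum>j\<in>UNIV. poly (pderiv (P i j)) 0 * y$j)"
          using DERIV_unique[OF d1 d2[folded eqf]] .
        then show ?thesis
          by (simp add: U'_def matrix_vector_mult_def M_def C_def poly_0_coeff_0 coeff_pderiv y_def)
      qed
      then show ?thesis by (simp add: vec_eq_iff)
    qed
    have "U' t *v x = (\<Sum>k<m. t^k *s ((\<chi> i j. coeff (pderiv (P i j)) k) *v x))" for t
      unfolding U'_def
    proof (rule expand, intro allI)
      fix i j
      show "degree (pderiv (P i j)) < m" using degD[of i j] m by (simp add: degree_pderiv)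
    qed
    moreover have "(\<chi> i j. coeff (pderiv (P i j)) k) *v x = of_nat (Suc k) *s (C (Suc k) *v x)" for k
      by (simp add: vec_eq_iff matrix_vector_mult_def coeff_pderiv C_def sum_distrib_left mult.assoc mult.left_commute del: of_nat_Suc)
    moreover have "M *v (U t *v x) = (\<Sum>k<m. t^k *s (M *v (C k *v x)))" for t
      using ex[OF m(1)] by (simp add: mv_sum mv_smult)
    ultimately have "\<forall>t. (\<Sum>k<m. t^k *s (of_nat (Suc k) *s (C (Suc k) *v x))) = (\<Sum>k<m. t^k *s (M *v (C k *v x)))"
      using der by simp
    from vcoeff_unique[OF this m(2)] show ?thesis .
  qed
  have C0: "C 0 = mat 1"
  proof -
    have "C 0 = U 0" by (simp add: vec_eq_iff C_def P poly_0_coeff_0)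
    then show ?thesis using U0 by simp
  qed
  have Ck: "C k *v x = (1 / fact k) *s mp M k x" for k x
  proof (induction k)
    case 0
    then show ?case by (simp add: C0)
  next
    case (Suc k)
    have "of_nat (Suc k) *s (C (Suc k) *v x) = (1 / fact k) *s mp M (Suc k) x"
      using rec[of k x] Suc by (simp add: mv_smult mp_Suc)
    then have "(1 / of_nat (Suc k)) *s (of_nat (Suc k) *s (C (Suc k) *v x)) = (1 / of_nat (Suc k)) *s ((1 / fact k) *s mp M (Suc k) x)"
      by simp
    then show ?case by (simp add: vector_smult_assoc del: of_nat_Suc)
  qed
  show ?thesis
  proof (intro exI conjI allI impI)
    fix x
    have "mp M D x = fact D *s (C D *v x)" by (simp add: Ck vector_smult_assoc)
    then show "mp M D x = 0" using CD by simp
  next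
    fix m t x assume "D \<le> m"
    then show "U t *v x = (\<Sum>k<m. (t^k / fact k) *s mp M k x)"
      by (simp add: ex Ck vector_smult_assoc)
  qed
qed

lemma mp_ge: "\<forall>x. mp M D x = 0 \<Longrightarrow> k \<ge> D \<Longrightarrow> mp M k x = 0"
  using mp_add[of M "k - D" D x] by simp

lemma max_idx: "f (0::nat) \<Longrightarrow> \<not> f D \<Longrightarrow> \<exists>k<D. f k \<and> \<not> f (Suc k)"
proof (induction D)
  case 0 then show ?case by simp
next
  case (Suc D)
  then show ?case by (cases "f D") (auto intro: less_SucI)
qed

lemma comm_coeff:
  assumes nil: "\<forall>x. mp M D x = 0"
    and ex: "\<forall>m\<ge>D. \<forall>t x. U t *v x = (\<Sum>k<m. (t^k / fact k) *s mp M k x)"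
    and c: "\<forall>t. B *v (U t *v x) = U t *v (B *v (x::complex^'n))"
  shows "B *v mp M k x = mp M k (B *v x)"
proof (cases "k < D")
  case True
  have "\<forall>t. (\<Sum>k<D. t^k *s ((1 / fact k) *s (B *v mp M k x))) = (\<Sum>k<D. t^k *s ((1 / fact k) *s mp M k (B *v x)))"
  proof
    fix t
    have e: "U t *v y = (\<Sum>k<D. (t^k / fact k) *s mp M k y)" for y using ex by auto
    have "B *v (U t *v x) = (\<Sum>k<D. (t^k / fact k) *s (B *v mp M k x))"
      using e by (simp add: mv_sum mv_smult)
    moreover have "U t *v (B *v x) = (\<Sum>k<D. (t^k / fact k) *s mp M k (B *v x))"
      using e by simp
    ultimately show "(\<Sum>k<D. t^k *s ((1 / fact k) *s (B *v mp M k x))) = (\<Sum>k<D. t^k *s ((1 / fact k) *s mp M k (B *v x)))"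
      using c by (simp add: vector_smult_assoc)
  qed
  from vcoeff_unique[OF this True] show ?thesis by simp
next
  case False
  then show ?thesis using mp_ge[OF nil] by simp
qed

lemma vp_const: "(\<lambda>x. c) \<in> vpoly" unfolding vpoly_def by (rule poly_gen.const)
lemma vp_coord: "(\<lambda>x. x $ i) \<in> vpoly" unfolding vpoly_def by (rule poly_gen.gen) auto
lemma vp_add: "f \<in> vpoly \<Longrightarrow> g \<in> vpoly \<Longrightarrow> (\<lambda>x. f x + g x) \<in> vpoly"
  unfolding vpoly_def by (rule poly_gen.add)
lemma vp_mult: "f \<in> vpoly \<Longrightarrow> g \<in> vpoly \<Longrightarrow> (\<lambda>x. f x * g x) \<in> vpoly"
  unfolding vpoly_def by (rule poly_gen.mult)
lemma vp_sub: "f \<in> vpoly \<Longrightarrow> g \<in> vpoly \<Longrightarrow> (\<lambda>x. f x - g x) \<in> vpoly"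
proof -
  assume "f \<in> vpoly" "g \<in> vpoly"
  then have "(\<lambda>x. f x + (-1) * g x) \<in> vpoly" by (intro vp_add vp_mult vp_const)
  then show ?thesis by simp
qed
lemma vp_sum: "finite S \<Longrightarrow> (\<And>k. k \<in> S \<Longrightarrow> f k \<in> vpoly) \<Longrightarrow> (\<lambda>x. \<Sum>k\<in>S. f k x) \<in> vpoly"
proof (induction S rule: finite_induct)
  case empty then show ?case using vp_const[of 0] by simp
next
  case (insert a S)
  then have "(\<lambda>x. f a x + (\<Sum>k\<in>S. f k x)) \<in> vpoly" by (intro vp_add) auto
  then show ?case using insert by simp
qed
lemma vp_mv: "(\<lambda>x. (A *v x) $ i) \<in> vpoly"
proof -
  have "(\<lambda>x. \<Sum>j\<in>UNIV. (\<lambda>j x. A$i$j * x$j) j x) \<in> vpoly"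
    by (rule vp_sum) (auto intro: vp_mult vp_const vp_coord)
  then show ?thesis by (simp add: matrix_vector_mult_def)
qed

lemma pline_mem: "u \<in> pline u" unfolding pline_def by (auto intro: exI[of _ 1])
lemma pline_eq: "pline u = pline v \<Longrightarrow> \<exists>c. v = c *s u"
  using pline_mem[of v] unfolding pline_def by auto
lemma pline_smult: "c \<noteq> 0 \<Longrightarrow> pline (c *s u) = pline u"
proof (rule set_eqI)
  fix x assume c: "c \<noteq> 0"
  have 1: "x = d *s (c *s u) \<Longrightarrow> \<exists>e. x = e *s u" for d by (auto simp: vector_smult_assoc)
  have 2: "x = d *s u \<Longrightarrow> \<exists>e. x = e *s (c *s u)" for d
    using c by (intro exI[of _ "d / c"]) (simp add: vector_smult_assoc)
  show "x \<in> pline (c *s u) \<longleftrightarrow> x \<in> pline u" unfolding pline_def using 1 2 by blast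
qed
lemma pact_pline: "pact \<rho> g (pline u) = pline (\<rho> g *v u)"
  unfolding pact_def pline_def by (auto simp: mv_smult[symmetric] intro!: image_eqI)
lemma PV_D: "L \<in> PV \<Longrightarrow> \<exists>u. u \<noteq> 0 \<and> L = pline u"
  unfolding PV_def by auto
lemma PV_I: "u \<noteq> 0 \<Longrightarrow> pline u \<in> PV"
  unfolding PV_def by auto

lemma sum_trunc: "n \<le> (m::nat) \<Longrightarrow> (\<forall>j\<ge>n. g j = 0) \<Longrightarrow> (\<Sum>j<m. g j) = (\<Sum>j<n. g j)"
proof (rule sum.mono_neutral_right)
  assume a: "n \<le> m" "\<forall>j\<ge>n. g j = 0"
  show "finite {..<m}" by simp
  show "{..<n} \<subseteq> {..<m}" using a by auto
  show "\<forall>i\<in>{..<m} - {..<n}. g i = 0" using a by auto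
qed

locale HS =
  fixes \<omega> :: "complex^'w::finite \<Rightarrow> complex^'w \<Rightarrow> complex"
    and \<rho> :: "(complex^'w) \<times> complex \<Rightarrow> complex^'v::finite^'v"
    and \<Omega> :: "(complex^'v) set set"
  assumes sf: "symplectic_form \<omega>" and hs: "heis_structure \<omega> \<rho> \<Omega>"
    and bd: "\<forall>L \<in> PV - \<Omega>. pact \<rho> (0, 1) L = L"
begin

lemma om_lin: "\<omega> (a *s x + b *s y) z = a * \<omega> x z + b * \<omega> y z"
  using sf unfolding symplectic_form_def by blast
lemma om_skew: "\<omega> x y = - \<omega> y x"
  using sf unfolding symplectic_form_def by blast
lemma om_0l[simp]: "\<omega> 0 z = 0" using om_lin[of 0 z 0 z z] by simp
lemma om_0r[simp]: "\<omega> z 0 = 0" using om_skew[of z 0] by simp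
lemma om_sm: "\<omega> (a *s x) z = a * \<omega> x z" using om_lin[of a x 0 x z] by simp
lemma om_self[simp]: "\<omega> x x = 0" using om_skew[of x x] by simp
lemma om_line[simp]: "\<omega> (s *s e) (t *s e) = 0"
proof -
  have "\<omega> (s *s e) (t *s e) = s * (- \<omega> (t *s e) e)" by (simp add: om_sm om_skew[of e])
  also have "\<dots> = 0" by (simp add: om_sm)
  finally show ?thesis .
qed
lemma om_neg: "\<omega> (- x) z = - \<omega> x z" using om_sm[of "-1" x z] by (simp add: vector_sneg_minus1[symmetric])

lemma r0[simp]: "\<rho> (0, 0) = mat 1" using hs unfolding heis_structure_def by blast
lemma rhom: "\<rho> (hmul \<omega> g h) = \<rho> g ** \<rho> h" using hs unfolding heis_structure_def by blast
lemma rpoly: "(\<lambda>g. \<rho> g $ i $ j) \<in> hpoly" using hs unfolding heis_structure_def by blast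
lemma eff: "(\<forall>L\<in>PV. pact \<rho> g L = L) \<Longrightarrow> g = (0, 0)" using hs unfolding heis_structure_def by blast
lemma zo: "zopen \<Omega>" using hs unfolding heis_structure_def by blast
lemma dense: "zcl \<Omega> = PV" using hs unfolding heis_structure_def by blast

lemma A_hom: "\<rho> (0, s + t) = \<rho> (0, s) ** \<rho> (0, t)"
  using rhom[of "(0, s)" "(0, t)"] by (simp add: hmul_def)
lemma A_poly: "\<exists>p. \<forall>t. \<rho> (0, t) $ i $ j = poly p t"
  using hpoly_line[of "\<lambda>g. \<rho> g $ i $ j" 0 1] rpoly[of i j] unfolding hpoly_def by simp

definition "QN N D \<longleftrightarrow> (\<forall>x. mp N D x = 0) \<and>
   (\<forall>m\<ge>D. \<forall>t x. \<rho> (0, t) *v x = (\<Sum>k<m. (t^k / fact k) *s mp N k x))"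

lemma exN: "\<exists>N D. QN N D"
  unfolding QN_def by (rule onepar) (use A_hom A_poly in auto)

definition "N = (SOME N. \<exists>D. QN N D)"
definition "DN = (SOME D. QN N D)"
lemma QN: "QN N DN"
proof -
  have "\<exists>D. QN N D" unfolding N_def using someI_ex[OF exN] .
  then show ?thesis unfolding DN_def by (rule someI_ex)
qed
lemma nilN: "mp N DN x = 0" using QN unfolding QN_def by blast
lemma exA: "m \<ge> DN \<Longrightarrow> \<rho> (0, t) *v x = (\<Sum>k<m. (t^k / fact k) *s mp N k x)"
  using QN unfolding QN_def by blast

lemma centr: "\<rho> g ** \<rho> (0, t) = \<rho> (0, t) ** \<rho> g"
proof -
  have "hmul \<omega> g (0, t) = hmul \<omega> (0, t) g" by (simp add: hmul_def)
  then show ?thesis using rhom[of g "(0, t)"] rhom[of "(0, t)" g] by simp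
qed

lemma rN: "\<rho> g *v (N *v x) = N *v (\<rho> g *v x)"
proof -
  have "\<rho> g *v mp N 1 x = mp N 1 (\<rho> g *v x)"
  proof (rule comm_coeff[where U = "\<lambda>t. \<rho> (0, t)"])
    show "\<forall>x. mp N DN x = 0" using nilN by blast
    show "\<forall>m\<ge>DN. \<forall>t x. \<rho> (0, t) *v x = (\<Sum>k<m. (t^k / fact k) *s mp N k x)" using exA by blast
    show "\<forall>t. \<rho> g *v (\<rho> (0, t) *v x) = \<rho> (0, t) *v (\<rho> g *v x)"
      by (simp add: matrix_vector_mul_assoc centr)
  qed
  then show ?thesis by (simp add: mp_Suc)
qed

lemma rNk: "\<rho> g *v mp N k x = mp N k (\<rho> g *v x)"
  by (induction k) (simp_all add: mp_Suc rN)

lemma rinv1: "\<rho> (- fst g, - snd g) ** \<rho> g = mat 1"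
proof -
  have "hmul \<omega> (- fst g, - snd g) g = (0, 0)" by (simp add: hmul_def om_neg)
  then show ?thesis using rhom[of "(- fst g, - snd g)" g] by simp
qed
lemma rinv: "\<rho> (- fst g, - snd g) *v (\<rho> g *v x) = x"
  by (simp add: matrix_vector_mul_assoc rinv1)
lemma rinj: "\<rho> g *v x = 0 \<Longrightarrow> x = 0"
  using rinv[of g x] by simp

lemma exz: "\<exists>z. z \<noteq> 0 \<and> \<Omega> = {pline (\<rho> g *v z) | g. True}"
proof -
  obtain x0 where "x0 \<in> PV" "\<Omega> = {pact \<rho> g x0 | g. True}" using hs unfolding heis_structure_def by blast
  moreover obtain z where "z \<noteq> 0" "x0 = pline z" using PV_D[OF \<open>x0 \<in> PV\<close>] by blast
  ultimately show ?thesis by (auto simp: pact_pline)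
qed
definition "z0 = (SOME z. z \<noteq> 0 \<and> \<Omega> = {pline (\<rho> g *v z) | g. True})"
lemma z0: "z0 \<noteq> 0" "\<Omega> = {pline (\<rho> g *v z0) | g. True}"
  using someI_ex[OF exz] unfolding z0_def[symmetric] by auto

lemma Om_PV: "\<Omega> \<subseteq> PV" using zo unfolding zopen_def by blast
lemma Om_in: "pline (\<rho> g *v z0) \<in> \<Omega>" using z0(2) by blast
lemma Om_mem: "pline u \<in> \<Omega> \<Longrightarrow> u \<noteq> 0 \<Longrightarrow> \<exists>g c. c \<noteq> 0 \<and> u = c *s (\<rho> g *v z0)"
proof -
  assume "pline u \<in> \<Omega>" "u \<noteq> 0"
  then obtain g where "pline u = pline (\<rho> g *v z0)" using z0(2) by blast
  then obtain c where "u = c *s (\<rho> g *v z0)" using pline_eq[of "\<rho> g *v z0" u] by metis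
  with \<open>u \<noteq> 0\<close> show ?thesis by (intro exI[of _ g] exI[of _ c]) auto
qed

end

context HS begin

lemma mp_gen0: "mp N k x = 0 \<Longrightarrow> j \<ge> k \<Longrightarrow> mp N j x = 0"
  using mp_add[of N "j - k" k x] by simp

lemma unip:
  assumes h: "\<rho> (0, 1) *v u = c *s u"
  shows "N *v u = 0"
proof (rule ccontr)
  assume nz: "N *v u \<noteq> 0"
  have "\<exists>k<DN. mp N (Suc k) u \<noteq> 0 \<and> \<not> mp N (Suc (Suc k)) u \<noteq> 0"
  proof (rule max_idx[of "\<lambda>k. mp N (Suc k) u \<noteq> 0"])
    show "mp N (Suc 0) u \<noteq> 0" using nz by (simp add: mp_Suc)
    show "\<not> mp N (Suc DN) u \<noteq> 0" using mp_ge[of N DN "Suc DN" u] nilN by auto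
  qed
  then obtain k where k1: "mp N (Suc k) u \<noteq> 0" and k2: "mp N (Suc (Suc k)) u = 0" by blast
  define m where "m = max DN 2"
  have m: "m \<ge> DN" "2 \<le> m" unfolding m_def by auto
  have "mp N k (\<rho> (0, 1) *v u) = (\<Sum>j<m. (1 / fact j) *s mp N (k + j) u)"
    by (simp add: exA[OF m(1)] mp_sum mp_smult mp_add)
  also have "\<dots> = (\<Sum>j<2. (1 / fact j) *s mp N (k + j) u)"
  proof (rule sum_trunc[OF m(2)], intro allI impI)
    fix j :: nat assume "2 \<le> j"
    then have "mp N (k + j) u = 0" using mp_gen0[OF k2] by simp
    then show "(1 / fact j) *s mp N (k + j) u = 0" by simp
  qed
  also have "\<dots> = mp N k u + mp N (Suc k) u" by (simp add: numeral_2_eq_2)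
  finally have e: "mp N k u + mp N (Suc k) u = c *s mp N k u" using h by (simp add: mp_smult)
  then have "N *v (mp N k u + mp N (Suc k) u) = N *v (c *s mp N k u)" by simp
  then have "mp N (Suc k) u = c *s mp N (Suc k) u" using k2 by (simp add: mv_add mv_smult mp_Suc[symmetric])
  then have "1 *s mp N (Suc k) u = c *s mp N (Suc k) u" by simp
  then have "c = 1" using k1 vector_mul_rcancel by metis
  then show False using e k1 by simp
qed

lemma bd_N: "u \<noteq> 0 \<Longrightarrow> pline u \<notin> \<Omega> \<Longrightarrow> N *v u = 0"
proof -
  assume "u \<noteq> 0" "pline u \<notin> \<Omega>"
  then have "pact \<rho> (0, 1) (pline u) = pline u" using bd PV_I by blast
  then have "pline u = pline (\<rho> (0, 1) *v u)" by (simp add: pact_pline)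
  then obtain c where "\<rho> (0, 1) *v u = c *s u" using pline_eq by metis
  then show ?thesis by (rule unip)
qed

end

context HS begin
lemma Nz0: "N *v z0 \<noteq> 0"
proof
  assume a: "N *v z0 = 0"
  have van: "\<forall>L\<in>\<Omega>. \<forall>x\<in>L. (N *v x) $ i = 0" for i
  proof (intro ballI)
    fix L x assume "L \<in> \<Omega>" "x \<in> L"
    then obtain g where "L = pline (\<rho> g *v z0)" using z0(2) by blast
    with \<open>x \<in> L\<close> obtain c where "x = c *s (\<rho> g *v z0)" unfolding pline_def by blast
    then show "(N *v x) $ i = 0" using a by (simp add: mv_smult rN[symmetric])
  qed
  have Nv: "N *v v = 0" for v
  proof (cases "v = 0")
    case False
    then have "pline v \<in> zcl \<Omega>" using dense PV_I[of v] by simp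
    then obtain v' where v': "pline v = pline v'" "v' \<noteq> 0"
      "\<forall>p\<in>vpoly. (\<forall>L\<in>\<Omega>. \<forall>x\<in>L. p x = 0) \<longrightarrow> p v' = 0" unfolding zcl_def mem_Collect_eq by metis
    have "(N *v v') $ i = 0" for i using bspec[OF v'(3) vp_mv[of N i], THEN mp, OF van[of i]] by simp
    then have "N *v v' = 0" by (simp add: vec_eq_iff)
    moreover obtain c where "v = c *s v'" using pline_eq[OF v'(1)[symmetric]] by blast
    ultimately show ?thesis by (simp add: mv_smult)
  qed simp
  have idA: "\<rho> (0, 1) *v v = v" for v
  proof -
    define m where "m = max DN 1"
    have m: "m \<ge> DN" "1 \<le> m" unfolding m_def by auto
    have "\<rho> (0, 1) *v v = (\<Sum>j<m. (1 / fact j) *s mp N j v)" by (simp add: exA[OF m(1)])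
    also have "\<dots> = (\<Sum>j<1. (1 / fact j) *s mp N j v)"
    proof (rule sum_trunc[OF m(2)], intro allI impI)
      fix j :: nat assume "1 \<le> j"
      then obtain j' where "j = Suc j'" by (cases j) auto
      then show "(1 / fact j) *s mp N j v = 0" by (simp add: mp_Suc' Nv)
    qed
    finally show ?thesis by simp
  qed
  then have "\<forall>L\<in>PV. pact \<rho> (0, 1) L = L"
  proof (intro ballI)
    fix L :: "(complex^'v) set" assume "L \<in> PV"
    then obtain v where "L = pline v" using PV_D by blast
    moreover have "pact \<rho> (0, 1) (pline v) = pline (\<rho> (0, 1) *v v)" by (rule pact_pline)
    then have "pact \<rho> (0, 1) (pline v) = pline v" by (simp only: idA)
    ultimately show "pact \<rho> (0, 1) L = L" by (simp only:)
  qed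
  then have "((0::complex^'w), (1::complex)) = (0, 0)" by (rule eff)
  then show False by simp
qed

end

context HS begin
lemma Om_iff: "u \<noteq> 0 \<Longrightarrow> pline u \<in> \<Omega> \<longleftrightarrow> N *v u \<noteq> 0"
proof
  assume "u \<noteq> 0" "pline u \<in> \<Omega>"
  then obtain g c where "c \<noteq> 0" "u = c *s (\<rho> g *v z0)" using Om_mem by blast
  then show "N *v u \<noteq> 0" using Nz0 rinj[of g "N *v z0"] by (simp add: mv_smult rN, blast)
next
  assume "u \<noteq> 0" "N *v u \<noteq> 0"
  then show "pline u \<in> \<Omega>" using bd_N by blast
qed

lemma idx_inv: "pline u \<in> \<Omega> \<Longrightarrow> u \<noteq> 0 \<Longrightarrow> mp N k u = 0 \<longleftrightarrow> mp N k z0 = 0"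
proof -
  assume "pline u \<in> \<Omega>" "u \<noteq> 0"
  then obtain g c where "c \<noteq> 0" "u = c *s (\<rho> g *v z0)" using Om_mem by blast
  then show ?thesis using rinj[of g "mp N k z0"] by (auto simp: mp_smult rNk[symmetric])
qed

lemma NN: "N *v (N *v u) = 0"
proof (rule ccontr)
  assume a: "N *v (N *v u) \<noteq> 0"
  then have nu: "N *v u \<noteq> 0" by auto
  then have u: "u \<noteq> 0" by auto
  have inu: "pline u \<in> \<Omega>" using Om_iff[OF u] nu by simp
  have innu: "pline (N *v u) \<in> \<Omega>" using Om_iff[OF nu] a by simp
  have "\<exists>k<DN. mp N k u \<noteq> 0 \<and> \<not> mp N (Suc k) u \<noteq> 0"
    by (rule max_idx) (use u nilN in auto)
  then obtain k where k1: "mp N k u \<noteq> 0" and k2: "mp N (Suc k) u = 0" by blast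
  have "mp N k z0 \<noteq> 0" using idx_inv[OF inu u] k1 by simp
  moreover have "mp N k (N *v u) = 0" using k2 by (simp add: mp_Suc')
  then have "mp N k z0 = 0" using idx_inv[OF innu nu] by simp
  ultimately show False by simp
qed

lemma A_lin: "\<rho> (0, t) *v u = u + t *s (N *v u)"
proof -
  define m where "m = max DN 2"
  have m: "m \<ge> DN" "2 \<le> m" unfolding m_def by auto
  have "\<rho> (0, t) *v u = (\<Sum>j<m. (t^j / fact j) *s mp N j u)" by (simp add: exA[OF m(1)])
  also have "\<dots> = (\<Sum>j<2. (t^j / fact j) *s mp N j u)"
  proof (rule sum_trunc[OF m(2)], intro allI impI)
    fix j :: nat assume "2 \<le> j"
    then obtain j' where "j = Suc (Suc j')" by (metis add_2_eq_Suc le_Suc_ex)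
    then show "(t^j / fact j) *s mp N j u = 0" by (simp add: mp_Suc' NN)
  qed
  also have "\<dots> = u + t *s (N *v u)" by (simp add: numeral_2_eq_2 mp_Suc)
  finally show ?thesis .
qed

end

context HS begin

lemma co_eq: "center_orbit \<rho> (pline u) = {pline (u + t *s (N *v u)) | t. True}"
  unfolding center_orbit_def by (simp add: pact_pline A_lin)

lemma orbit_pt:
  assumes u: "N *v u \<noteq> 0"
    and h: "zcl (center_orbit \<rho> (pline u)) - center_orbit \<rho> (pline u) = {p}"
  shows "p = pline (N *v u)"
proof -
  define w where "w = N *v u"
  obtain i0 where i0: "w $ i0 \<noteq> 0" using u unfolding w_def by (auto simp: vec_eq_iff)
  define lam where "lam y = (N *v y) $ i0" for y
  define lu where "lu = lam u"
  have lu: "lu = w $ i0" unfolding lu_def lam_def w_def by simp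
  have lw: "lam w = 0" unfolding lam_def w_def by (simp add: NN)
  define co where "co = center_orbit \<rho> (pline u)"
  have co: "co = {pline (u + t *s w) | t. True}" unfolding co_def w_def by (rule co_eq)
  define mm where "mm i j y = (lu * y$i - lam y * u$i) * w$j - (lu * y$j - lam y * u$j) * w$i" for i j y
  have mm_vp: "(\<lambda>y. mm i j y) \<in> vpoly" for i j
    unfolding mm_def lam_def by (intro vp_sub vp_mult vp_const vp_coord vp_mv)
  have mm_van: "\<forall>L\<in>co. \<forall>x\<in>L. mm i j x = 0" for i j
  proof (intro ballI)
    fix L x assume "L \<in> co" "x \<in> L"
    then obtain t where "L = pline (u + t *s w)" using co by blast
    with \<open>x \<in> L\<close> obtain c where x: "x = c *s (u + t *s w)" unfolding pline_def by blast
    have "lam x = c * lu" unfolding x lu_def using lw unfolding lam_def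
      by (simp add: mv_smult mv_add algebra_simps)
    then show "mm i j x = 0" unfolding mm_def by (simp add: x algebra_simps)
  qed
  have pz: "p \<in> zcl co" and pn: "p \<notin> co" using h unfolding co_def by auto
  then obtain x where x: "p = pline x" "x \<noteq> 0" "\<forall>q\<in>vpoly. (\<forall>L\<in>co. \<forall>y\<in>L. q y = 0) \<longrightarrow> q x = 0"
    unfolding zcl_def mem_Collect_eq by metis
  have mx: "mm i i0 x = 0" for i using bspec[OF x(3) mm_vp[of i i0], THEN mp, OF mm_van[of i i0]] by simp
  define \<beta> where "\<beta> = (lu * x$i0 - lam x * u$i0) / w$i0"
  have comp: "lu * x$i - lam x * u$i = \<beta> * w$i" for i
    using mx[of i] i0 unfolding mm_def \<beta>_def by (simp add: field_simps)
  have lu0: "lu \<noteq> 0" using i0 lu by simp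
  show ?thesis
  proof (cases "lam x = 0")
    case False
    have xe: "x = (lam x / lu) *s (u + (\<beta> / lam x) *s w)"
    proof -
      have xi: "x $ i = (lam x / lu) * (u$i + (\<beta> / lam x) * w$i)" for i
      proof -
        have E: "x$i = (\<beta> * w$i + lam x * u$i) / lu" using comp[of i] lu0 by (simp add: field_simps)
        have "(lam x / lu) * (u$i + (\<beta> / lam x) * w$i) = (lam x * u$i + \<beta> * w$i) / lu"
          using False lu0 by (simp add: field_simps)
        then show ?thesis using E by (metis add.commute)
      qed
      show ?thesis by (rule vec_eq_iff[THEN iffD2], intro allI) (simp only: xi vector_smult_component vector_add_component)
    qed
    have c0: "lam x / lu \<noteq> 0" using False lu0 by simp
    have "p = pline (u + (\<beta> / lam x) *s w)" using x(1) xe pline_smult[OF c0] by metis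
    then have "p \<in> co" using co by blast
    with pn show ?thesis by blast
  next
    case True
    have xw: "x = (\<beta> / lu) *s w"
    proof -
      have xi: "x $ i = (\<beta> / lu) * w$i" for i
        using comp[of i] True lu0 by (simp add: field_simps)
      show ?thesis by (rule vec_eq_iff[THEN iffD2], intro allI) (simp only: xi vector_smult_component vector_add_component)
    qed
    then have "\<beta> \<noteq> 0" using x(2) by auto
    then have c0: "\<beta> / lu \<noteq> 0" using lu0 by simp
    show ?thesis using x(1) xw pline_smult[OF c0] unfolding w_def by metis
  qed
qed

end

context HS begin

lemma ab: "N *v y = 0 \<Longrightarrow> \<rho> (a, 0) *v (\<rho> (b, 0) *v y) = \<rho> (a + b, 0) *v y"
proof -
  assume y: "N *v y = 0"
  have "\<rho> (a, 0) ** \<rho> (b, 0) = \<rho> (a + b, \<omega> a b / 2)" using rhom[of "(a, 0)" "(b, 0)"] by (simp add: hmul_def)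
  also have "\<rho> (a + b, \<omega> a b / 2) = \<rho> (a + b, 0) ** \<rho> (0, \<omega> a b / 2)"
    using rhom[of "(a + b, 0)" "(0, \<omega> a b / 2)"] by (simp add: hmul_def)
  finally have "\<rho> (a, 0) ** \<rho> (b, 0) = \<rho> (a + b, 0) ** \<rho> (0, \<omega> a b / 2)" .
  then have "\<rho> (a, 0) *v (\<rho> (b, 0) *v y) = \<rho> (a + b, 0) *v (\<rho> (0, \<omega> a b / 2) *v y)"
    by (simp only: matrix_vector_mul_assoc)
  then show ?thesis using y by (simp add: A_lin)
qed

definition "Ue j t = \<rho> (t *s axis j 1, 0)"

lemma Ue_hom: "Ue j (s + t) = Ue j s ** Ue j t"
  using rhom[of "(s *s axis j 1, 0)" "(t *s axis j 1, 0)"] by (simp add: hmul_def Ue_def vector_sadd_rdistrib)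
lemma Ue_0: "Ue j 0 = mat 1" by (simp add: Ue_def)
lemma Ue_poly: "\<exists>p. \<forall>t. Ue j t $ i $ k = poly p t"
  using hpoly_line[of "\<lambda>g. \<rho> g $ i $ k" "axis j 1" 0] rpoly[of i k] unfolding hpoly_def Ue_def by simp

lemma fix_all:
  assumes y: "N *v y = 0" and f: "\<And>j t. Ue j t *v y = y"
  shows "\<rho> g *v y = y"
proof -
  have "finite F \<Longrightarrow> \<rho> (\<Sum>j\<in>F. w$j *s axis j 1, 0) *v y = y" for F w
  proof (induction F rule: finite_induct)
    case empty then show ?case by simp
  next
    case (insert j F)
    have "\<rho> (\<Sum>j\<in>insert j F. w$j *s axis j 1, 0) *v y = \<rho> (w$j *s axis j 1 + (\<Sum>j\<in>F. w$j *s axis j 1), 0) *v y"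
      using insert by simp
    also have "\<dots> = \<rho> (w$j *s axis j 1, 0) *v (\<rho> ((\<Sum>j\<in>F. w$j *s axis j 1), 0) *v y)"
      using ab[OF y] by simp
    also have "\<dots> = y" using insert f[of j "w$j"] by (simp add: Ue_def)
    finally show ?case .
  qed
  then have w0: "\<rho> (w, 0) *v y = y" for w using basis_expansion[of w] by (metis finite)
  obtain w s where g: "g = (w, s)" by (cases g)
  have "\<rho> (w, s) = \<rho> (w, 0) ** \<rho> (0, s)" using rhom[of "(w, 0)" "(0, s)"] by (simp add: hmul_def)
  then have "\<rho> (w, s) *v y = \<rho> (w, 0) *v (\<rho> (0, s) *v y)" by (simp only: matrix_vector_mul_assoc)
  then show ?thesis using g w0 y by (simp add: A_lin)
qed

lemma fix_ex: "finite F \<Longrightarrow> \<exists>z1. N *v z1 \<noteq> 0 \<and> (\<forall>j\<in>F. \<forall>t. Ue j t *v (N *v z1) = N *v z1)"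
proof (induction F rule: finite_induct)
  case empty then show ?case using Nz0 by blast
next
  case (insert j F)
  then obtain z1 where z1: "N *v z1 \<noteq> 0" "\<forall>j\<in>F. \<forall>t. Ue j t *v (N *v z1) = N *v z1" by blast
  define y where "y = N *v z1"
  have Ny: "N *v y = 0" unfolding y_def by (simp add: NN)
  obtain M DM where nil: "\<forall>x. mp M DM x = 0"
    and ex: "\<forall>m\<ge>DM. \<forall>t x. Ue j t *v x = (\<Sum>k<m. (t^k / fact k) *s mp M k x)"
    using onepar[of "Ue j"] Ue_hom Ue_0 Ue_poly by metis
  have "\<exists>k<DM. mp M k y \<noteq> 0 \<and> \<not> mp M (Suc k) y \<noteq> 0"
    by (rule max_idx) (use z1(1) nil y_def in auto)
  then obtain d where d1: "mp M d y \<noteq> 0" and d2: "mp M (Suc d) y = 0" by blast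
  have cN: "N *v mp M d z1 = mp M d (N *v z1)"
    by (rule comm_coeff[OF nil ex]) (simp add: Ue_def rN)
  define z2 where "z2 = mp M d z1"
  have Nz2: "N *v z2 = mp M d y" unfolding z2_def y_def by (rule cN)
  have fj: "Ue j t *v (mp M d y) = mp M d y" for t
  proof -
    define m where "m = max DM 1"
    have m: "m \<ge> DM" "1 \<le> m" unfolding m_def by auto
    have "Ue j t *v (mp M d y) = (\<Sum>k<m. (t^k / fact k) *s mp M k (mp M d y))" using ex m by blast
    also have "\<dots> = (\<Sum>k<1. (t^k / fact k) *s mp M k (mp M d y))"
    proof (rule sum_trunc[OF m(2)], intro allI impI)
      fix k :: nat assume "1 \<le> k"
      then obtain k' where "k = Suc k'" by (cases k) auto
      then show "(t^k / fact k) *s mp M k (mp M d y) = 0" using d2 by (simp add: mp_Suc' mp_Suc[symmetric])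
    qed
    finally show ?thesis by simp
  qed
  have fF: "Ue j' s *v (mp M d y) = mp M d y" if "j' \<in> F" for j' s
  proof -
    have "Ue j' s *v mp M d y = mp M d (Ue j' s *v y)"
    proof (rule comm_coeff[OF nil ex], intro allI)
      fix t
      show "Ue j' s *v (Ue j t *v y) = Ue j t *v (Ue j' s *v y)"
        unfolding Ue_def using ab[OF Ny] by (simp add: add.commute)
    qed
    then show ?thesis using z1(2) that unfolding y_def by simp
  qed
  show ?case
    by (rule exI[of _ z2]) (use Nz2 d1 fj fF in auto)
qed

lemma fix_vec: "\<exists>z1. N *v z1 \<noteq> 0 \<and> (\<forall>g. \<rho> g *v (N *v z1) = N *v z1)"
proof -
  obtain z1 where z1: "N *v z1 \<noteq> 0" "\<forall>j\<in>UNIV. \<forall>t. Ue j t *v (N *v z1) = N *v z1"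
    using fix_ex[of UNIV] by auto
  then show ?thesis using fix_all[of "N *v z1"] NN by blast
qed

lemma all_same: "N *v u \<noteq> 0 \<Longrightarrow> N *v u' \<noteq> 0 \<Longrightarrow> pline (N *v u) = pline (N *v u')"
proof -
  obtain z1 where z1: "N *v z1 \<noteq> 0" "\<And>g. \<rho> g *v (N *v z1) = N *v z1" using fix_vec by blast
  define y0 where "y0 = N *v z1"
  have key: "pline (N *v v) = pline y0" if v: "N *v v \<noteq> 0" for v
  proof -
    have v0: "v \<noteq> 0" using v by auto
    have z10: "z1 \<noteq> 0" using z1 by auto
    obtain g c where gc: "c \<noteq> 0" "v = c *s (\<rho> g *v z0)" using Om_mem[OF Om_iff[OF v0, THEN iffD2, OF v] v0] by blast
    obtain h a where ha: "a \<noteq> 0" "z1 = a *s (\<rho> h *v z0)" using Om_mem[OF Om_iff[OF z10, THEN iffD2, OF z1(1)] z10] by blast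
    have "y0 = a *s (\<rho> h *v (N *v z0))" unfolding y0_def ha(2) by (simp add: mv_smult rN)
    then have "\<rho> (- fst h, - snd h) *v y0 = a *s (N *v z0)" by (simp add: mv_smult rinv)
    then have "y0 = a *s (N *v z0)" using z1(2) unfolding y0_def by simp
    then have Nz: "N *v z0 = (1 / a) *s y0" using ha(1) by (simp add: vector_smult_assoc)
    have "N *v v = (c / a) *s y0" unfolding gc(2)
      by (simp add: mv_smult rN[symmetric] Nz z1(2)[folded y0_def] vector_smult_assoc)
    moreover have "c / a \<noteq> 0" using gc(1) ha(1) by simp
    ultimately show ?thesis using pline_smult by metis
  qed
  assume "N *v u \<noteq> 0" "N *v u' \<noteq> 0"
  then show ?thesis using key by metis
qed

end

theorem lemma2p5:
  fixes n :: nat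
    and \<omega> :: "complex^'w::finite \<Rightarrow> complex^'w \<Rightarrow> complex"
    and \<rho> :: "(complex^'w) \<times> complex \<Rightarrow> complex^'v::finite^'v"
    and \<Omega> :: "(complex^'v) set set"
  assumes "n \<ge> 1"
    and "CARD('w) = 2 * n"
    and "CARD('v) = 2 * n + 2"
    and "symplectic_form \<omega>"
    and "heis_structure \<omega> \<rho> \<Omega>"
    and "\<forall>L \<in> PV - \<Omega>. pact \<rho> (0, 1) L = L"
  shows "\<forall>q\<in>\<Omega>. \<forall>q'\<in>\<Omega>. \<forall>p p'.
           zcl (center_orbit \<rho> q) - center_orbit \<rho> q = {p} \<longrightarrow>
           zcl (center_orbit \<rho> q') - center_orbit \<rho> q' = {p'} \<longrightarrow> p = p'"
proof -
  interpret HS \<omega> \<rho> \<Omega> using assms(4-6) by unfold_locales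
  have key: "p = pline (N *v u)" if q: "q \<in> \<Omega>" "q = pline u" "u \<noteq> 0"
    and h: "zcl (center_orbit \<rho> q) - center_orbit \<rho> q = {p}" for q u p
  proof -
    have "N *v u \<noteq> 0" using Om_iff[OF q(3)] q(1,2) by simp
    then show ?thesis using orbit_pt h q(2) by blast
  qed
  show ?thesis
  proof (intro ballI allI impI)
    fix q q' p p'
    assume q: "q \<in> \<Omega>" "q' \<in> \<Omega>"
      and h: "zcl (center_orbit \<rho> q) - center_orbit \<rho> q = {p}"
      and h': "zcl (center_orbit \<rho> q') - center_orbit \<rho> q' = {p'}"
    obtain u where u: "u \<noteq> 0" "q = pline u" using PV_D q(1) Om_PV by blast
    obtain u' where u': "u' \<noteq> 0" "q' = pline u'" using PV_D q(2) Om_PV by blast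
    have n: "N *v u \<noteq> 0" using Om_iff[OF u(1)] q(1) u(2) by simp
    have n': "N *v u' \<noteq> 0" using Om_iff[OF u'(1)] q(2) u'(2) by simp
    have "p = pline (N *v u)" using key[OF q(1) u(2) u(1) h] .
    moreover have "p' = pline (N *v u')" using key[OF q(2) u'(2) u'(1) h'] .
    ultimately show "p = p'" using all_same[OF n n'] by simp
  qed
qed

end
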